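(* Let $M=\frac32-\sqrt2$ and for $\xi\in[0,1]$ define $$G_\xi(w,f)=(1-f)\,y\left(\tfrac12-y\right)+4M\xi\cdot\frac{w}{1-f},\qquad y=1-\frac{w}{1-f}.$$ Let $\kappa=\frac{1038}{1000}$. For all $w_1,w_2,w_3\in[0,\frac12]$ and $f_1,f_2,f_3\in[\frac1{13},\frac12]$ such that $\frac{1-f_i}{2}\le w_i\le 1-f_i$ for $i=1,2,3$, and for every $\xi\in[0,1]$, $$\tfrac12\bigl(G_\xi(w_1,f_1)+G_\xi(w_2,f_2)\bigr)\le\kappa\cdot G_\xi\!\left(\tfrac{w_1+w_2}{2},\tfrac{f_1+f_2}{2}\right),$$ $$\tfrac13\bigl(G_\xi(w_1,f_1)+G_\xi(w_2,f_2)+G_\xi(w_3,f_3)\bigr)\le\kappa\cdot G_\xi\!\left(\tfrac{w_1+w_2+w_3}{3},\tfrac{f_1+f_2+f_3}{3}\right).$$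
   Context: Here $(1-f)y(\frac12-y)$ with $y=1-\frac{w}{1-f}$ is the quantity $\frac{1-f}{\Phi(1-\frac w{1-f})}$ for the potential $\Phi(x)=\frac{1}{x(\frac12-x)}$; the constant $M=\frac32-\sqrt2$ equals $\sup_{0\le x\le 1/2}\frac{x(\frac12-x)}{1-x}$. *)

theory Defs
  imports Complex_Main
begin

definition M_const :: real where
  "M_const = 3/2 - sqrt 2"

definition G :: "real \<Rightarrow> real \<Rightarrow> real \<Rightarrow> real" where
  "G \<xi> w f = (let y = 1 - w / (1 - f) in
      (1 - f) * y * (1/2 - y) + 4 * M_const * \<xi> * (w / (1 - f)))"

definition kappa :: real where
  "kappa = 1038 / 1000"

end

theory Submission imports Defs begin

lemma poly0: fixes a b :: real assumes "a\<in>{1/2..12/13}" "b\<in>{1/2..12/13}" "a \<le> b"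
  shows "(b-a)^2 \<le> 33/100*a*b*(a+b)"
proof -
  have 1: "(b-a)^2 \<le> (11/26)*(b-a)" unfolding power2_eq_square
    using assms by (intro mult_right_mono) auto
  then have 1: "(b-a)^2 \<le> 11/26*b - 11/26*a" by (simp add: algebra_simps)
  have 2: "a*a \<ge> 1/4" "a*b \<ge> b/2" using assms mult_mono[of "1/2" a "1/2" a] by auto
  have "a*b*(a+b) = b*(a*a) + b*(a*b)" by (simp add: algebra_simps)
  also have "\<dots> \<ge> b*(1/4) + b*(b/2)" using 2 assms
    by (intro add_mono mult_left_mono) auto
  finally have 3: "a*b*(a+b) \<ge> b/4 + b*b/2" by simp
  have 4: "b*b \<ge> 24/13*b - 144/169" using sum_squares_ge_zero[of "b - 12/13" 0]
    by (simp add: power2_eq_square algebra_simps)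
  obtain X Y Z where XYZ: "X = (b-a)^2" "Y = a*b*(a+b)" "Z = b*b" by blast
  have "X \<le> 33/100*Y" using 1 3 4 assms(1,2,3) unfolding atLeastAtMost_iff XYZ[symmetric] by (elim conjE, linarith)
  then show ?thesis by (simp add: XYZ mult.assoc)
qed
lemma poly: fixes a b :: real assumes "a\<in>{1/2..12/13}" "b\<in>{1/2..12/13}"
  shows "(b-a)^2 \<le> 33/100*a*b*(a+b)"
proof (cases "a \<le> b")
  case True then show ?thesis using poly0 assms by blast
next
  case False then have "(a-b)^2 \<le> 33/100*b*a*(b+a)" using poly0 assms by simp
  then show ?thesis by (simp add: power2_commute algebra_simps)
qed

lemma c_bounds: "0 < 4*M_const" "4*M_const \<le> 3432/10000"
proof -
  have "sqrt 2 < 3/2" by (rule real_less_lsqrt) (auto simp: power2_eq_square)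
  then show "0 < 4*M_const" unfolding M_const_def by simp
  have "14142/10000 \<le> sqrt 2" by (rule real_le_rsqrt) (simp add: power2_eq_square)
  then show "4*M_const \<le> 3432/10000" unfolding M_const_def by simp
qed

lemma pair:
  fixes a b p q c \<xi> :: real
  assumes a: "a\<in>{1/2..12/13}" and b: "b\<in>{1/2..12/13}" and x: "0 \<le> \<xi>" "\<xi> \<le> 1"
    and c: "0 < c" "c \<le> 3432/10000"
  shows "- (a*b*(p-q)^2) + c*\<xi>*((p-q)*(b-a)) \<le> c*\<xi>*(57/2000)*(a+b)"
proof -
  have ab: "a*b > 0" using a b by auto
  have P: "(b-a)^2 \<le> 33/100*(a*b*(a+b))" using poly[OF a b] by (simp add: mult.assoc)
  have abp: "a*b*(a+b) \<ge> 0" using a b by auto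
  have "c*(b-a)^2 \<le> c*(33/100*(a*b*(a+b)))" using P c by (intro mult_left_mono) auto
  also have "\<dots> \<le> (3432/10000)*(33/100*(a*b*(a+b)))" using c abp by (intro mult_right_mono) auto
  also have "\<dots> \<le> 114/1000*(a*b*(a+b))" using abp by simp
  finally have ce: "c*(b-a)^2 \<le> 114/1000*(a*b*(a+b))" .
  have sq: "0 \<le> (2*(a*b)*(p-q) - c*\<xi>*(b-a))^2" by simp
  have 1: "4*(a*b)*(- (a*b*(p-q)^2) + c*\<xi>*((p-q)*(b-a))) \<le> (c*\<xi>^2)*(c*(b-a)^2)"
    using sq by (simp add: power2_eq_square algebra_simps)
  have cx: "0 \<le> c*\<xi>^2" using c by simp
  have "(c*\<xi>^2)*(c*(b-a)^2) \<le> (c*\<xi>^2)*(114/1000*(a*b*(a+b)))"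
    using ce cx by (rule mult_left_mono)
  also have "\<dots> \<le> (c*\<xi>)*(114/1000*(a*b*(a+b)))"
  proof (rule mult_right_mono)
    have "\<xi>^2 \<le> \<xi>" using x by (simp add: power2_eq_square mult_left_le_one_le)
    then show "c*\<xi>^2 \<le> c*\<xi>" using c by simp
  qed (use abp in simp)
  also have "\<dots> = 4*(a*b)*(c*\<xi>*(57/2000)*(a+b))" by (simp add: algebra_simps)
  finally have "4*(a*b)*(- (a*b*(p-q)^2) + c*\<xi>*((p-q)*(b-a))) \<le> 4*(a*b)*(c*\<xi>*(57/2000)*(a+b))"
    using 1 by linarith
  then show ?thesis by (rule mult_left_le_imp_le) (use ab in auto)
qed


lemma G_single:
  assumes "f < 1"
  shows "G \<xi> w f = (1-f)*(1 - w/(1-f))*(w/(1-f) - 1/2) + 4*M_const*\<xi>*(w/(1-f))"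
  unfolding G_def Let_def by (simp add: algebra_simps)

lemma G_bar:
  fixes n P V :: real
  assumes "P > 0" "n > 0"
  shows "n*P*G \<xi> (V/n) (1 - P/n) = (P-V)*(V-P/2) + n*(4*M_const)*\<xi>*V"
  unfolding G_def Let_def using assms by (simp add: field_simps power2_eq_square)

lemma lin: fixes X E Q Y Z :: real
  shows "X - E \<le> 57/1000*Z \<Longrightarrow> E = Q + 3*Y \<Longrightarrow> 0 \<le> Q \<Longrightarrow> Z \<le> 2*Y \<Longrightarrow> X \<le> 1038/1000*E"
  by linarith

lemma lin2: fixes D T1 T2 T3 B1 B2 B3 K :: real
  shows "D = T1+T2+T3 \<Longrightarrow> T1 \<le> B1 \<Longrightarrow> T2 \<le> B2 \<Longrightarrow> T3 \<le> B3 \<Longrightarrow> B1+B2+B3 = K \<Longrightarrow> D \<le> K"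
  by linarith

lemma main3:
  fixes s1 s2 s3 u1 u2 u3 \<xi> c Gb :: real
  assumes s: "s1\<in>{1/2..12/13}" "s2\<in>{1/2..12/13}" "s3\<in>{1/2..12/13}"
    and u: "1/2 \<le> u1" "u1 \<le> 1" "1/2 \<le> u2" "u2 \<le> 1" "1/2 \<le> u3" "u3 \<le> 1"
    and x: "0 \<le> \<xi>" "\<xi> \<le> 1" and c: "0 < c" "c \<le> 3432/10000"
    and Gb: "3*(s1+s2+s3)*Gb = ((s1+s2+s3)-(s1*u1+s2*u2+s3*u3))*((s1*u1+s2*u2+s3*u3)-(s1+s2+s3)/2)
        + 3*c*\<xi>*(s1*u1+s2*u2+s3*u3)"
  shows "((s1*(1-u1)*(u1-1/2) + c*\<xi>*u1) + (s2*(1-u2)*(u2-1/2) + c*\<xi>*u2)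
          + (s3*(1-u3)*(u3-1/2) + c*\<xi>*u3))/3 \<le> kappa * Gb"
proof -
  define P where "P = s1+s2+s3"
  define V where "V = s1*u1+s2*u2+s3*u3"
  define S where "S = (s1*(1-u1)*(u1-1/2) + c*\<xi>*u1) + (s2*(1-u2)*(u2-1/2) + c*\<xi>*u2)
          + (s3*(1-u3)*(u3-1/2) + c*\<xi>*u3)"
  define E where "E = (P-V)*(V-P/2) + 3*c*\<xi>*V"
  have Ppos: "P > 0" using s unfolding P_def by auto
  have id: "P*S - E = (- (s1*s2*(u1-u2)^2) + c*\<xi>*((u1-u2)*(s2-s1)))
     + (- (s1*s3*(u1-u3)^2) + c*\<xi>*((u1-u3)*(s3-s1)))
     + (- (s2*s3*(u2-u3)^2) + c*\<xi>*((u2-u3)*(s3-s2)))"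
    unfolding P_def S_def E_def V_def by (simp add: field_simps power2_eq_square)
  have t1: "- (s1*s2*(u1-u2)^2) + c*\<xi>*((u1-u2)*(s2-s1)) \<le> c*\<xi>*(57/2000)*(s1+s2)"
    by (rule pair) (use s x c in auto)
  have t2: "- (s1*s3*(u1-u3)^2) + c*\<xi>*((u1-u3)*(s3-s1)) \<le> c*\<xi>*(57/2000)*(s1+s3)"
    by (rule pair) (use s x c in auto)
  have t3: "- (s2*s3*(u2-u3)^2) + c*\<xi>*((u2-u3)*(s3-s2)) \<le> c*\<xi>*(57/2000)*(s2+s3)"
    by (rule pair) (use s x c in auto)
  have sumT: "c*\<xi>*(57/2000)*(s1+s2) + c*\<xi>*(57/2000)*(s1+s3) + c*\<xi>*(57/2000)*(s2+s3)
     = 57/1000*((c*\<xi>)*P)" unfolding P_def by (simp add: field_simps)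
  have V1: "V \<ge> P/2"
  proof -
    have "s1*u1 \<ge> s1*(1/2)" "s2*u2 \<ge> s2*(1/2)" "s3*u3 \<ge> s3*(1/2)"
      using s u by (auto intro!: mult_left_mono)
    then show ?thesis unfolding V_def P_def by (simp add: field_simps)
  qed
  have V2: "V \<le> P"
  proof -
    have "s1*u1 \<le> s1*1" "s2*u2 \<le> s2*1" "s3*u3 \<le> s3*1"
      using s u by (auto intro!: mult_left_mono)
    then show ?thesis unfolding V_def P_def by (simp add: field_simps)
  qed
  have pv: "(P-V)*(V-P/2) \<ge> 0" using V1 V2 by simp
  have cxV: "(c*\<xi>)*V \<ge> (c*\<xi>)*(P/2)" using V1 c x by (intro mult_left_mono) auto
  have "P*S \<le> kappa*E"
  proof -
    have a1: "P*S - E \<le> 57/1000*((c*\<xi>)*P)" by (rule lin2[OF id t1 t2 t3 sumT])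
    have a2: "E = (P-V)*(V-P/2) + 3*((c*\<xi>)*V)" unfolding E_def by simp
    have a3: "(c*\<xi>)*P \<le> 2*((c*\<xi>)*V)" using cxV by (simp add: field_simps)
    have "P*S \<le> 1038/1000*E" using lin[OF a1 a2 pv a3] .
    then show ?thesis unfolding kappa_def by simp
  qed
  moreover have "E = 3*P*Gb" using Gb unfolding E_def P_def V_def by simp
  ultimately have "P*S \<le> P*(3*kappa*Gb)" by (simp add: algebra_simps)
  then have "S \<le> 3*kappa*Gb" using Ppos by (rule mult_left_le_imp_le)
  then show ?thesis unfolding S_def by simp
qed


lemma lin3: fixes X E Q Y Z :: real
  shows "X - E \<le> 57/2000*Z \<Longrightarrow> E = Q + 2*Y \<Longrightarrow> 0 \<le> Q \<Longrightarrow> Z \<le> 2*Y \<Longrightarrow> 0 \<le> Z \<Longrightarrow> X \<le> 1038/1000*E"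
  by linarith

lemma main2:
  fixes s1 s2 u1 u2 \<xi> c Gb :: real
  assumes s: "s1\<in>{1/2..12/13}" "s2\<in>{1/2..12/13}"
    and u: "1/2 \<le> u1" "u1 \<le> 1" "1/2 \<le> u2" "u2 \<le> 1"
    and x: "0 \<le> \<xi>" "\<xi> \<le> 1" and c: "0 < c" "c \<le> 3432/10000"
    and Gb: "2*(s1+s2)*Gb = ((s1+s2)-(s1*u1+s2*u2))*((s1*u1+s2*u2)-(s1+s2)/2)
        + 2*c*\<xi>*(s1*u1+s2*u2)"
  shows "((s1*(1-u1)*(u1-1/2) + c*\<xi>*u1) + (s2*(1-u2)*(u2-1/2) + c*\<xi>*u2))/2 \<le> kappa * Gb"
proof -
  define P where "P = s1+s2"
  define V where "V = s1*u1+s2*u2"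
  define S where "S = (s1*(1-u1)*(u1-1/2) + c*\<xi>*u1) + (s2*(1-u2)*(u2-1/2) + c*\<xi>*u2)"
  define E where "E = (P-V)*(V-P/2) + 2*c*\<xi>*V"
  have Ppos: "P > 0" using s unfolding P_def by auto
  have id: "P*S - E = (- (s1*s2*(u1-u2)^2) + c*\<xi>*((u1-u2)*(s2-s1)))"
    unfolding P_def S_def E_def V_def by (simp add: field_simps power2_eq_square)
  have t1: "- (s1*s2*(u1-u2)^2) + c*\<xi>*((u1-u2)*(s2-s1)) \<le> c*\<xi>*(57/2000)*(s1+s2)"
    by (rule pair) (use s x c in auto)
  have a1: "P*S - E \<le> 57/2000*((c*\<xi>)*P)" using id t1 unfolding P_def by (simp add: field_simps)
  have V1: "V \<ge> P/2"
  proof -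
    have "s1*u1 \<ge> s1*(1/2)" "s2*u2 \<ge> s2*(1/2)"
      using s u by (auto intro!: mult_left_mono)
    then show ?thesis unfolding V_def P_def by (simp add: field_simps)
  qed
  have V2: "V \<le> P"
  proof -
    have "s1*u1 \<le> s1*1" "s2*u2 \<le> s2*1"
      using s u by (auto intro!: mult_left_mono)
    then show ?thesis unfolding V_def P_def by (simp add: field_simps)
  qed
  have pv: "(P-V)*(V-P/2) \<ge> 0" using V1 V2 by simp
  have cxV: "(c*\<xi>)*V \<ge> (c*\<xi>)*(P/2)" using V1 c x by (intro mult_left_mono) auto
  have a2: "E = (P-V)*(V-P/2) + 2*((c*\<xi>)*V)" unfolding E_def by simp
  have a3: "(c*\<xi>)*P \<le> 2*((c*\<xi>)*V)" using cxV by (simp add: field_simps)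
  have "P*S \<le> 1038/1000*E" using lin3[OF a1 a2 pv a3] Ppos c x by simp
  then have "P*S \<le> kappa*E" unfolding kappa_def by simp
  moreover have "E = 2*P*Gb" using Gb unfolding E_def P_def V_def by simp
  ultimately have "P*S \<le> P*(2*kappa*Gb)" by (simp add: algebra_simps)
  then have "S \<le> 2*kappa*Gb" using Ppos by (rule mult_left_le_imp_le)
  then show ?thesis unfolding S_def by simp
qed

lemma u_facts:
  fixes w f :: real
  assumes "f \<in> {1/13..1/2}" "(1 - f) / 2 \<le> w" "w \<le> 1 - f"
  shows "1-f \<in> {1/2..12/13}" "1/2 \<le> w/(1-f)" "w/(1-f) \<le> 1" "(1-f)*(w/(1-f)) = w"
    "G \<xi> w f = (1-f)*(1-w/(1-f))*(w/(1-f)-1/2) + 4*M_const*\<xi>*(w/(1-f))"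
proof -
  have fp: "1 - f > 0" using assms by auto
  show "1-f \<in> {1/2..12/13}" using assms by auto
  show "1/2 \<le> w/(1-f)" using assms fp by (simp add: field_simps)
  show "w/(1-f) \<le> 1" using assms fp by (simp add: field_simps)
  show "(1-f)*(w/(1-f)) = w" using fp by simp
  show "G \<xi> w f = (1-f)*(1-w/(1-f))*(w/(1-f)-1/2) + 4*M_const*\<xi>*(w/(1-f))"
    using fp by (intro G_single) simp
qed

theorem lemma18:
  fixes w1 w2 w3 f1 f2 f3 \<xi> :: real
  assumes "w1 \<in> {0..1/2}" "w2 \<in> {0..1/2}" "w3 \<in> {0..1/2}"
    and "f1 \<in> {1/13..1/2}" "f2 \<in> {1/13..1/2}" "f3 \<in> {1/13..1/2}"
    and "(1 - f1) / 2 \<le> w1" "w1 \<le> 1 - f1"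
    and "(1 - f2) / 2 \<le> w2" "w2 \<le> 1 - f2"
    and "(1 - f3) / 2 \<le> w3" "w3 \<le> 1 - f3"
    and "\<xi> \<in> {0..1}"
  shows "(G \<xi> w1 f1 + G \<xi> w2 f2) / 2 \<le> kappa * G \<xi> ((w1 + w2) / 2) ((f1 + f2) / 2)
    \<and> (G \<xi> w1 f1 + G \<xi> w2 f2 + G \<xi> w3 f3) / 3
           \<le> kappa * G \<xi> ((w1 + w2 + w3) / 3) ((f1 + f2 + f3) / 3)"
proof -
  note F1 = u_facts[OF assms(4,7,8)]
  note F2 = u_facts[OF assms(5,9,10)]
  note F3 = u_facts[OF assms(6,11,12)]
  note cb = c_bounds
  have x: "0 \<le> \<xi>" "\<xi> \<le> 1" using assms(13) by auto
  define s1 where "s1 = 1 - f1"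
  define s2 where "s2 = 1 - f2"
  define s3 where "s3 = 1 - f3"
  define u1 where "u1 = w1/(1-f1)"
  define u2 where "u2 = w2/(1-f2)"
  define u3 where "u3 = w3/(1-f3)"
  have w1: "w1 = s1*u1" using F1(4) unfolding s1_def u1_def by simp
  have w2: "w2 = s2*u2" using F2(4) unfolding s2_def u2_def by simp
  have w3: "w3 = s3*u3" using F3(4) unfolding s3_def u3_def by simp
  have g1: "G \<xi> w1 f1 = s1*(1-u1)*(u1-1/2) + (4*M_const)*\<xi>*u1" using u_facts(5)[OF assms(4,7,8), of \<xi>] unfolding s1_def u1_def by simp
  have g2: "G \<xi> w2 f2 = s2*(1-u2)*(u2-1/2) + (4*M_const)*\<xi>*u2" using u_facts(5)[OF assms(5,9,10), of \<xi>] unfolding s2_def u2_def by simp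
  have g3: "G \<xi> w3 f3 = s3*(1-u3)*(u3-1/2) + (4*M_const)*\<xi>*u3" using u_facts(5)[OF assms(6,11,12), of \<xi>] unfolding s3_def u3_def by simp
  have P2: "s1+s2 > 0" using F1(1) F2(1) unfolding s1_def s2_def by auto
  have P3: "s1+s2+s3 > 0" using F1(1) F2(1) F3(1) unfolding s1_def s2_def s3_def by auto
  have e2: "G \<xi> ((w1 + w2) / 2) ((f1 + f2) / 2) = G \<xi> ((s1*u1+s2*u2)/2) (1 - (s1+s2)/2)"
    unfolding w1 w2 by (simp add: s1_def s2_def field_simps)
  have e3: "G \<xi> ((w1 + w2 + w3) / 3) ((f1 + f2 + f3) / 3) = G \<xi> ((s1*u1+s2*u2+s3*u3)/3) (1 - (s1+s2+s3)/3)"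
    unfolding w1 w2 w3 by (simp add: s1_def s2_def s3_def field_simps)
  have Gb2: "2*(s1+s2)*G \<xi> ((s1*u1+s2*u2)/2) (1 - (s1+s2)/2) = ((s1+s2)-(s1*u1+s2*u2))*((s1*u1+s2*u2)-(s1+s2)/2)
        + 2*(4*M_const)*\<xi>*(s1*u1+s2*u2)"
    using G_bar[OF P2, of 2 \<xi> "s1*u1+s2*u2"] by simp
  have Gb3: "3*(s1+s2+s3)*G \<xi> ((s1*u1+s2*u2+s3*u3)/3) (1 - (s1+s2+s3)/3) = ((s1+s2+s3)-(s1*u1+s2*u2+s3*u3))*((s1*u1+s2*u2+s3*u3)-(s1+s2+s3)/2)
        + 3*(4*M_const)*\<xi>*(s1*u1+s2*u2+s3*u3)"
    using G_bar[OF P3, of 3 \<xi> "s1*u1+s2*u2+s3*u3"] by simp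
  have r2: "((s1*(1-u1)*(u1-1/2) + (4*M_const)*\<xi>*u1) + (s2*(1-u2)*(u2-1/2) + (4*M_const)*\<xi>*u2))/2
      \<le> kappa * G \<xi> ((s1*u1+s2*u2)/2) (1 - (s1+s2)/2)"
    by (rule main2[OF _ _ _ _ _ _ x cb Gb2]) (use F1 F2 in \<open>auto simp: s1_def s2_def u1_def u2_def\<close>)
  have r3: "((s1*(1-u1)*(u1-1/2) + (4*M_const)*\<xi>*u1) + (s2*(1-u2)*(u2-1/2) + (4*M_const)*\<xi>*u2)
      + (s3*(1-u3)*(u3-1/2) + (4*M_const)*\<xi>*u3))/3
      \<le> kappa * G \<xi> ((s1*u1+s2*u2+s3*u3)/3) (1 - (s1+s2+s3)/3)"
    by (rule main3[OF _ _ _ _ _ _ _ _ _ x cb Gb3]) (use F1 F2 F3 in \<open>auto simp: s1_def s2_def s3_def u1_def u2_def u3_def\<close>)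
  show ?thesis using r2 r3 unfolding g1 g2 g3 e2 e3 by simp
qed

end
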